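(* Let $A\in\mathbb{R}^{m\times n}$ have singular value decomposition $A=U\Sigma V^\top$ (with $U\in\mathbb{R}^{m\times m}$, $V\in\mathbb{R}^{n\times n}$ orthogonal), let $r=\operatorname{rank}(A)$, and let $\lambda:=(\sigma_1^2(A),\ldots,\sigma_r^2(A),0,\ldots,0)^\top\in\mathbb{R}^m$ (the eigenvalues of $AA^\top$ in the order matching the columns of $U$). Let $1\le s\le r$ and let $\mathcal{S}$ be a random variable with $\mathcal{S}\sim\operatorname{Vol}_s(AA^\top)$. Then $$\mathbb{E}[A_{\mathcal{S}}^\dagger A_{\mathcal{S}}]=A^\top H_s A,\qquad\text{where}\quad H_s:=\frac{U\operatorname{diag}\big(e_{s-1}(\lambda_{-1}),\ldots,e_{s-1}(\lambda_{-m})\big)U^\top}{e_s(\lambda)}.$$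
   Context: $\sigma_1(A)\ge\cdots\ge\sigma_r(A)>0$ are the nonzero singular values of $A$. For $\xi\in\mathbb{R}^p$ and $1\le \ell\le p$, $e_\ell(\xi):=\sum_{1\le i_1<\cdots<i_\ell\le p}\xi_{i_1}\cdots\xi_{i_\ell}$ is the $\ell$-th elementary symmetric polynomial, and $e_0(\xi):=1$. For $i\in[m]$, $\lambda_{-i}\in\mathbb{R}^{m-1}$ is $\lambda$ with its $i$-th entry removed. For $\mathcal{S}\subseteq[m]=\{1,\dots,m\}$, $A_{\mathcal{S}}$ is the submatrix of $A$ consisting of the rows indexed by $\mathcal{S}$, and $A_{\mathcal{S}}^\dagger$ its Moore–Penrose pseudoinverse. Volume sampling: $\binom{[m]}{s}$ denotes the set of $s$-element subsets of $[m]$; a random variable $\mathcal{S}_0$ with values in $\binom{[m]}{s}$ satisfies $\mathcal{S}_0\sim\operatorname{Vol}_s(AA^\top)$ if $\mathbb{P}(\mathcal{S}_0=\mathcal{S})=\det(A_{\mathcal{S}}A_{\mathcal{S}}^\top)/\sum_{\mathcal{J}\in\binom{[m]}{s}}\det(A_{\mathcal{J}}A_{\mathcal{J}}^\top)$ for all $\mathcal{S}\in\binom{[m]}{s}$. *)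

theory Defs
  imports "Jordan_Normal_Form.DL_Rank" "Jordan_Normal_Form.DL_Submatrix"
begin

definition pinv_mat :: "real mat \<Rightarrow> real mat" where
  "pinv_mat A = (SOME X. X \<in> carrier_mat (dim_col A) (dim_row A) \<and>
      A * X * A = A \<and> X * A * X = X \<and>
      transpose_mat (A * X) = A * X \<and> transpose_mat (X * A) = X * A)"

(* rows of A indexed by S (in increasing order) *)
definition row_submat :: "real mat \<Rightarrow> nat set \<Rightarrow> real mat" where
  "row_submat A S = submatrix A S {0..<dim_col A}"

definition esym :: "nat \<Rightarrow> nat set \<Rightarrow> (nat \<Rightarrow> real) \<Rightarrow> real" where
  "esym l I xi = (\<Sum>T\<in>{T. T \<subseteq> I \<and> card T = l}. \<Prod>i\<in>T. xi i)"

definition vol_prob :: "real mat \<Rightarrow> nat \<Rightarrow> nat set \<Rightarrow> real" where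
  "vol_prob A s S =
     det (row_submat A S * transpose_mat (row_submat A S)) /
     (\<Sum>J\<in>{J. J \<subseteq> {0..<dim_row A} \<and> card J = s}.
        det (row_submat A J * transpose_mat (row_submat A J)))"

definition vol_expect :: "real mat \<Rightarrow> nat \<Rightarrow> (nat set \<Rightarrow> real mat) \<Rightarrow> nat \<Rightarrow> nat \<Rightarrow> real mat" where
  "vol_expect A s F nr nc = mat nr nc (\<lambda>(i,j).
     \<Sum>S\<in>{S. S \<subseteq> {0..<dim_row A} \<and> card S = s}. vol_prob A s S * (F S $$ (i,j)))"

end

theory Submission
  imports Defs
begin

definition dets :: "(nat \<Rightarrow> nat \<Rightarrow> real) \<Rightarrow> nat set \<Rightarrow> real" where
  "dets c S = (\<Sum>p\<in>{p. p permutes S}. of_int (sign p) * (\<Prod>i\<in>S. c i (p i)))"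

lemma dets_cong:
  assumes "\<And>i j. i \<in> S \<Longrightarrow> j \<in> S \<Longrightarrow> c i j = c' i j"
  shows "dets c S = dets c' S"
  unfolding dets_def
proof (intro sum.cong refl arg_cong2[where f="(*)"] prod.cong)
  fix p i assume "p \<in> {p. p permutes S}" "i \<in> S"
  then show "c i (p i) = c' i (p i)" using assms permutes_in_image by fastforce
qed

lemma dets_diag_add:
  assumes S: "finite S"
  shows "dets (\<lambda>i j. c i j + (if i = j then d i else 0)) S
       = (\<Sum>T\<in>Pow S. (\<Prod>i\<in>S - T. d i) * dets c T)"
proof -
  have "dets (\<lambda>i j. c i j + (if i = j then d i else 0)) S
     = (\<Sum>p\<in>{p. p permutes S}. \<Sum>T\<in>Pow S. of_int (sign p) * ((\<Prod>i\<in>T. c i (p i)) * (\<Prod>i\<in>S - T. (if i = p i then d i else 0))))"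
    unfolding dets_def
    by (intro sum.cong refl) (simp add: prod_add[OF S] sum_distrib_left)
  also have "\<dots> = (\<Sum>T\<in>Pow S. \<Sum>p\<in>{p. p permutes S}. of_int (sign p) * ((\<Prod>i\<in>T. c i (p i)) * (\<Prod>i\<in>S - T. (if i = p i then d i else 0))))"
    by (rule sum.swap)
  also have "\<dots> = (\<Sum>T\<in>Pow S. (\<Prod>i\<in>S - T. d i) * dets c T)"
  proof (intro sum.cong refl)
    fix T assume T: "T \<in> Pow S"
    have fT: "finite T" using T S finite_subset by auto
    have "(\<Sum>p\<in>{p. p permutes S}. of_int (sign p) * ((\<Prod>i\<in>T. c i (p i)) * (\<Prod>i\<in>S - T. (if i = p i then d i else 0))))
       = (\<Sum>p\<in>{p. p permutes T}. of_int (sign p) * ((\<Prod>i\<in>T. c i (p i)) * (\<Prod>i\<in>S - T. (if i = p i then d i else 0))))"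
    proof (rule sum.mono_neutral_right)
      show "finite {p. p permutes S}" using S by (rule finite_permutations)
      show "{p. p permutes T} \<subseteq> {p. p permutes S}" using T permutes_subset by auto
      show "\<forall>p\<in>{p. p permutes S} - {p. p permutes T}. of_int (sign p) * ((\<Prod>i\<in>T. c i (p i)) * (\<Prod>i\<in>S - T. (if i = p i then d i else 0))) = 0"
      proof
        fix p assume p: "p \<in> {p. p permutes S} - {p. p permutes T}"
        have "\<exists>i\<in>S - T. p i \<noteq> i"
        proof (rule ccontr)
          assume "\<not> (\<exists>i\<in>S - T. p i \<noteq> i)"
          then have "p permutes T" using p unfolding permutes_def by auto
          then show False using p by auto
        qed
        then obtain i0 where i0: "i0 \<in> S - T" "p i0 \<noteq> i0" by blast
        have "(\<Prod>i\<in>S - T. (if i = p i then d i else 0)) = 0"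
          using S i0 by (intro prod_zero) (auto intro!: bexI[of _ i0])
        then show "of_int (sign p) * ((\<Prod>i\<in>T. c i (p i)) * (\<Prod>i\<in>S - T. (if i = p i then d i else 0))) = 0" by simp
      qed
    qed
    also have "\<dots> = (\<Sum>p\<in>{p. p permutes T}. (\<Prod>i\<in>S - T. d i) * (of_int (sign p) * (\<Prod>i\<in>T. c i (p i))))"
    proof (intro sum.cong refl)
      fix p assume "p \<in> {p. p permutes T}"
      then have "\<And>i. i \<in> S - T \<Longrightarrow> p i = i" using permutes_not_in by fastforce
      then have "(\<Prod>i\<in>S - T. (if i = p i then d i else 0)) = (\<Prod>i\<in>S - T. d i)"
        by (intro prod.cong) auto
      then show "of_int (sign p) * ((\<Prod>i\<in>T. c i (p i)) * (\<Prod>i\<in>S - T. (if i = p i then d i else 0))) = (\<Prod>i\<in>S - T. d i) * (of_int (sign p) * (\<Prod>i\<in>T. c i (p i)))"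
        by simp
    qed
    also have "\<dots> = (\<Prod>i\<in>S - T. d i) * dets c T"
      unfolding dets_def by (simp add: sum_distrib_left)
    finally show "(\<Sum>p\<in>{p. p permutes S}. of_int (sign p) * ((\<Prod>i\<in>T. c i (p i)) * (\<Prod>i\<in>S - T. (if i = p i then d i else 0)))) = (\<Prod>i\<in>S - T. d i) * dets c T" .
  qed
  finally show ?thesis .
qed

lemma sum_sign_zero:
  assumes T: "finite T" "2 \<le> card T"
  shows "(\<Sum>p\<in>{p. p permutes T}. (of_int (sign p) :: real)) = 0"
proof -
  have "T \<noteq> {}" using T by auto
  then obtain x where x: "x \<in> T" by blast
  have "card (T - {x}) \<ge> 1" using T x by (simp add: card_Diff_singleton)
  then have "T - {x} \<noteq> {}" by (metis card.empty not_one_le_zero)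
  then obtain y where y: "y \<in> T - {x}" by blast
  have xy: "x \<in> T" "y \<in> T" "x \<noteq> y" using x y by auto
  define tau where "tau = Transposition.transpose x y"
  have tauT: "tau permutes T" unfolding tau_def using xy by (simp add: permutes_swap_id)
  have inv: "\<And>p. tau \<circ> (tau \<circ> p) = p" by (simp add: tau_def fun_eq_iff)
  have "(\<Sum>p\<in>{p. p permutes T}. (of_int (sign p) :: real)) = (\<Sum>p\<in>{p. p permutes T}. of_int (sign (tau \<circ> p)))"
  proof (rule sum.reindex_bij_witness[where i="\<lambda>p. tau \<circ> p" and j="\<lambda>p. tau \<circ> p"])
    fix p assume "p \<in> {p. p permutes T}"
    then show "tau \<circ> (tau \<circ> p) = p" "tau \<circ> p \<in> {p. p permutes T}"
      using tauT permutes_compose inv by auto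
    show "(of_int (sign (tau \<circ> (tau \<circ> p))) :: real) = of_int (sign p)"
      by (simp only: inv)
  qed (use tauT permutes_compose inv in auto)
  also have "\<dots> = (\<Sum>p\<in>{p. p permutes T}. - of_int (sign p))"
  proof (intro sum.cong refl)
    fix p assume "p \<in> {p. p permutes T}"
    then have "permutation p" using T permutes_imp_permutation by blast
    moreover have "permutation tau" using tauT T permutes_imp_permutation by blast
    ultimately show "(of_int (sign (tau \<circ> p)) :: real) = - of_int (sign p)"
      by (simp add: sign_compose tau_def sign_swap_id xy)
  qed
  also have "\<dots> = - (\<Sum>p\<in>{p. p permutes T}. (of_int (sign p) :: real))"
    by (simp add: sum_negf)
  finally show ?thesis by simp
qed

lemma dets_rank1_zero:
  assumes T: "finite T" "2 \<le> card T"
  shows "dets (\<lambda>i j. a i * b j) T = 0"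
proof -
  have "dets (\<lambda>i j. a i * b j) T = (\<Sum>p\<in>{p. p permutes T}. of_int (sign p) * ((\<Prod>i\<in>T. a i) * (\<Prod>i\<in>T. b i)))"
    unfolding dets_def
  proof (intro sum.cong refl)
    fix p assume "p \<in> {p. p permutes T}"
    then have "(\<Prod>i\<in>T. b (p i)) = (\<Prod>i\<in>T. b i)"
      using prod.permute[of p T b] by (simp add: o_def)
    then show "of_int (sign p) * (\<Prod>i\<in>T. a i * b (p i)) = of_int (sign p) * ((\<Prod>i\<in>T. a i) * (\<Prod>i\<in>T. b i))"
      by (simp add: prod.distrib)
  qed
  also have "\<dots> = (\<Sum>p\<in>{p. p permutes T}. (of_int (sign p) :: real)) * ((\<Prod>i\<in>T. a i) * (\<Prod>i\<in>T. b i))"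
    by (simp add: sum_distrib_right)
  also have "\<dots> = 0" using sum_sign_zero[OF T] by simp
  finally show ?thesis .
qed

lemma dets_empty: "dets c {} = 1"
  unfolding dets_def by simp

lemma dets_sing: "dets c {k} = c k k"
  unfolding dets_def by simp

lemma sum_pow_small:
  assumes S: "finite S" and g: "\<And>T. T \<subseteq> S \<Longrightarrow> 2 \<le> card T \<Longrightarrow> g T = 0"
  shows "(\<Sum>T\<in>Pow S. g T) = g {} + (\<Sum>k\<in>S. g {k})"
proof -
  have "(\<Sum>T\<in>Pow S. g T) = (\<Sum>T\<in>insert {} ((\<lambda>k. {k}) ` S). g T)"
  proof (rule sum.mono_neutral_right)
    show "finite (Pow S)" using S by simp
    show "insert {} ((\<lambda>k. {k}) ` S) \<subseteq> Pow S" by auto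
    show "\<forall>T\<in>Pow S - insert {} ((\<lambda>k. {k}) ` S). g T = 0"
    proof
      fix T assume T: "T \<in> Pow S - insert {} ((\<lambda>k. {k}) ` S)"
      then have fT: "finite T" using S finite_subset by auto
      have "card T \<noteq> 0" using T fT by auto
      moreover have "card T \<noteq> 1" using T by (auto simp: card_1_singleton_iff)
      ultimately show "g T = 0" using g T by auto
    qed
  qed
  also have "\<dots> = g {} + (\<Sum>T\<in>(\<lambda>k. {k}) ` S. g T)"
    using S by (subst sum.insert) auto
  also have "(\<Sum>T\<in>(\<lambda>k. {k}) ` S. g T) = (\<Sum>k\<in>S. g {k})"
    by (subst sum.reindex) (auto simp: inj_on_def)
  finally show ?thesis .
qed

lemma dets_diag_rank1:
  assumes S: "finite S"
  shows "dets (\<lambda>i j. a i * b j + (if i = j then d i else 0)) S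
       = (\<Prod>i\<in>S. d i) + (\<Sum>k\<in>S. a k * b k * (\<Prod>i\<in>S - {k}. d i))"
proof -
  have "dets (\<lambda>i j. a i * b j + (if i = j then d i else 0)) S
      = (\<Sum>T\<in>Pow S. (\<Prod>i\<in>S - T. d i) * dets (\<lambda>i j. a i * b j) T)"
    by (rule dets_diag_add[OF S])
  also have "\<dots> = (\<Prod>i\<in>S - {}. d i) * dets (\<lambda>i j. a i * b j) {} + (\<Sum>k\<in>S. (\<Prod>i\<in>S - {k}. d i) * dets (\<lambda>i j. a i * b j) {k})"
    by (rule sum_pow_small[OF S]) (simp add: dets_rank1_zero[OF finite_subset[OF _ S]])
  also have "\<dots> = (\<Prod>i\<in>S. d i) + (\<Sum>k\<in>S. a k * b k * (\<Prod>i\<in>S - {k}. d i))"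
    by (simp add: dets_empty dets_sing mult.commute)
  finally show ?thesis .
qed


lemma pick_bij:
  assumes "finite S"
  shows "bij_betw (pick S) {0..<card S} S"
proof -
  have inj: "inj_on (pick S) {0..<card S}"
    by (intro inj_onI) (metis atLeastLessThan_iff nat_neq_iff pick_mono_le)
  have sub: "pick S ` {0..<card S} \<subseteq> S" using pick_in_set_le by auto
  have "card (pick S ` {0..<card S}) = card S" using card_image[OF inj] by simp
  then have "pick S ` {0..<card S} = S" using card_subset_eq[OF assms sub] by simp
  then show ?thesis using inj unfolding bij_betw_def by simp
qed

lemma det_submatrix_dets:
  assumes C: "C \<in> carrier_mat m m" and S: "S \<subseteq> {0..<m}"
  shows "det (submatrix C S S) = dets (\<lambda>i j. C $$ (i,j)) S"
proof -
  have fS: "finite S" using S finite_subset by blast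
  define k where "k = card S"
  have setS: "{i. i < dim_row C \<and> i \<in> S} = S" "{i. i < dim_col C \<and> i \<in> S} = S" using S C by auto
  have carr: "submatrix C S S \<in> carrier_mat k k" unfolding carrier_mat_def using setS by (simp add: dim_submatrix k_def)
  define f where "f = pick S"
  have bij: "bij_betw f {0..<k} S" unfolding f_def k_def by (rule pick_bij[OF fS])
  have inj: "inj_on f {0..<k}" using bij bij_betw_def by blast
  define g where "g = inv_into {0..<k} f"
  have bijg: "bij_betw g S {0..<k}" unfolding g_def by (rule bij_betw_inv_into[OF bij])
  have "det (submatrix C S S) = (\<Sum>\<sigma>\<in>{\<sigma>. \<sigma> permutes {0..<k}}. of_int (sign \<sigma>) * (\<Prod>i = 0..<k. C $$ (f i, f (\<sigma> i))))"
    unfolding det_def'[OF carr]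
  proof (intro sum.cong refl arg_cong2[where f="(*)"] prod.cong)
    fix \<sigma> i assume s: "\<sigma> \<in> {\<sigma>. \<sigma> permutes {0..<k}}" and i: "i \<in> {0..<k}"
    then have "\<sigma> i \<in> {0..<k}" using permutes_in_image by fastforce
    then show "submatrix C S S $$ (i, \<sigma> i) = C $$ (f i, f (\<sigma> i))"
      using i setS by (simp add: submatrix_index f_def k_def)
  qed
  also have "\<dots> = dets (\<lambda>i j. C $$ (i,j)) S"
    unfolding dets_def
  proof (rule sum.reindex_bij_witness[where j="map_permutation {0..<k} f" and i="map_permutation S g"])
    fix \<sigma> assume \<sigma>: "\<sigma> \<in> {\<sigma>. \<sigma> permutes {0..<k}}"
    show "map_permutation S g (map_permutation {0..<k} f \<sigma>) = \<sigma>"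
      by (rule map_permutation_compose_inv[OF bij]) (use \<sigma> in \<open>auto simp: g_def inv_into_f_f[OF inj]\<close>)
    show "map_permutation {0..<k} f \<sigma> \<in> {p. p permutes S}"
      using map_permutation_permutes[OF bij] \<sigma> by auto
    have "sign (map_permutation {0..<k} f \<sigma>) = sign \<sigma>" using sign_map_permutation[OF inj] \<sigma> by auto
    moreover have "(\<Prod>i\<in>S. C $$ (i, map_permutation {0..<k} f \<sigma> i)) = (\<Prod>i = 0..<k. C $$ (f i, f (\<sigma> i)))"
    proof -
      have "(\<Prod>i\<in>S. C $$ (i, map_permutation {0..<k} f \<sigma> i)) = (\<Prod>i\<in>{0..<k}. C $$ (f i, map_permutation {0..<k} f \<sigma> (f i)))"
        by (rule prod.reindex_bij_betw[OF bij, symmetric])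
      also have "\<dots> = (\<Prod>i = 0..<k. C $$ (f i, f (\<sigma> i)))"
        using map_permutation_apply[OF inj] by (intro prod.cong) auto
      finally show ?thesis .
    qed
    ultimately show "of_int (sign (map_permutation {0..<k} f \<sigma>)) * (\<Prod>i\<in>S. C $$ (i, map_permutation {0..<k} f \<sigma> i)) = of_int (sign \<sigma>) * (\<Prod>i = 0..<k. C $$ (f i, f (\<sigma> i)))" by simp
  next
    fix p assume p: "p \<in> {p. p permutes S}"
    show "map_permutation {0..<k} f (map_permutation S g p) = p"
      by (rule map_permutation_compose_inv[OF bijg]) (use p bij in \<open>auto simp: g_def f_inv_into_f bij_betw_def\<close>)
    show "map_permutation S g p \<in> {\<sigma>. \<sigma> permutes {0..<k}}" using map_permutation_permutes[OF bijg] p by auto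
  qed
  finally show ?thesis .
qed

definition psum :: "nat \<Rightarrow> nat \<Rightarrow> real mat \<Rightarrow> real" where
  "psum m s X = (\<Sum>S\<in>{S. S \<subseteq> {0..<m} \<and> card S = s}. dets (\<lambda>i j. X $$ (i,j)) S)"

lemma det_tI_add:
  assumes X: "X \<in> carrier_mat m m"
  shows "det (t \<cdot>\<^sub>m 1\<^sub>m m + X) = (\<Sum>k\<le>m. t^(m-k) * psum m k X)"
proof -
  have carr: "t \<cdot>\<^sub>m 1\<^sub>m m + X \<in> carrier_mat m m" using X by simp
  have "det (t \<cdot>\<^sub>m 1\<^sub>m m + X) = dets (\<lambda>i j. X $$ (i,j) + (if i = j then t else 0)) {0..<m}"
    unfolding det_def'[OF carr] dets_def
  proof (intro sum.cong refl arg_cong2[where f="(*)"] prod.cong)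
    fix p i assume p: "p \<in> {p. p permutes {0..<m}}" and i: "i \<in> {0..<m}"
    then have "p i \<in> {0..<m}" using permutes_in_image by fastforce
    then show "(t \<cdot>\<^sub>m 1\<^sub>m m + X) $$ (i, p i) = X $$ (i, p i) + (if i = p i then t else 0)"
      using i X by auto
  qed
  also have "\<dots> = (\<Sum>T\<in>Pow {0..<m}. (\<Prod>i\<in>{0..<m} - T. t) * dets (\<lambda>i j. X $$ (i,j)) T)"
    by (rule dets_diag_add) simp
  also have "\<dots> = (\<Sum>T\<in>Pow {0..<m}. t^(m - card T) * dets (\<lambda>i j. X $$ (i,j)) T)"
  proof (intro sum.cong refl)
    fix T assume "T \<in> Pow {0..<m}"
    then have "card ({0..<m} - T) = m - card T"
      by (subst card_Diff_subset) (auto intro: finite_subset)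
    then show "(\<Prod>i\<in>{0..<m} - T. t) * dets (\<lambda>i j. X $$ (i,j)) T = t^(m - card T) * dets (\<lambda>i j. X $$ (i,j)) T"
      by simp
  qed
  also have "\<dots> = (\<Sum>k\<le>m. \<Sum>T\<in>{T \<in> Pow {0..<m}. card T = k}. t^(m - card T) * dets (\<lambda>i j. X $$ (i,j)) T)"
  proof (rule sum.group[symmetric])
    show "card ` Pow {0..<m} \<subseteq> {..m}"
    proof
      fix x assume "x \<in> card ` Pow {0..<m}"
      then obtain T where "T \<subseteq> {0..<m}" "x = card T" by auto
      then show "x \<in> {..m}" using card_mono[of "{0..<m}" T] by auto
    qed
  qed auto
  also have "\<dots> = (\<Sum>k\<le>m. t^(m-k) * psum m k X)"
  proof (intro sum.cong refl)
    fix k assume "k \<in> {..m}"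
    have "(\<Sum>T\<in>{T \<in> Pow {0..<m}. card T = k}. t^(m - card T) * dets (\<lambda>i j. X $$ (i,j)) T)
        = (\<Sum>T\<in>{S. S \<subseteq> {0..<m} \<and> card S = k}. t^(m - k) * dets (\<lambda>i j. X $$ (i,j)) T)"
      by (rule sum.cong) auto
    then show "(\<Sum>T\<in>{T \<in> Pow {0..<m}. card T = k}. t^(m - card T) * dets (\<lambda>i j. X $$ (i,j)) T) = t^(m-k) * psum m k X"
      unfolding psum_def by (simp add: sum_distrib_left)
  qed
  finally show ?thesis .
qed

lemma psum_big:
  assumes "m < s" shows "psum m s X = 0"
proof -
  have c: "card S \<le> m" if "S \<subseteq> {0..<m}" for S
    using card_mono[of "{0..<m}" S] that by simp
  have E: "{S. S \<subseteq> {0..<m} \<and> card S = s} = {}"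
    using c assms by (metis (mono_tags, lifting) empty_Collect_eq not_le)
  show ?thesis unfolding psum_def by (simp only: E sum.empty)
qed

lemma poly_coeff_unique:
  fixes a b :: "nat \<Rightarrow> real"
  assumes eq: "\<And>t. (\<Sum>k\<le>m. t^(m-k) * a k) = (\<Sum>k\<le>m. t^(m-k) * b k)" and s: "s \<le> m"
  shows "a s = b s"
proof -
  define q where "q = (\<Sum>k\<le>m. monom (a k - b k) (m-k))"
  have "\<forall>t. poly q t = 0"
  proof
    fix t
    have "poly q t = (\<Sum>k\<le>m. t^(m-k) * a k) - (\<Sum>k\<le>m. t^(m-k) * b k)"
      unfolding q_def poly_sum poly_monom sum_subtractf[symmetric]
      by (intro sum.cong refl) (simp add: algebra_simps)
    then show "poly q t = 0" using eq by simp
  qed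
  then have "q = 0" using poly_all_0_iff_0 by blast
  then have "coeff q (m - s) = 0" by simp
  moreover have "coeff q (m - s) = (\<Sum>k\<le>m. if k = s then a k - b k else 0)"
    unfolding q_def coeff_sum coeff_monom
    by (intro sum.cong refl) (use s in auto)
  moreover have "(\<Sum>k\<le>m. if k = s then a k - b k else 0) = a s - b s"
    using s by (simp add: sum.delta)
  ultimately show ?thesis by simp
qed

lemma orth_right:
  fixes U :: "real mat"
  assumes U: "U \<in> carrier_mat m m" and UU: "transpose_mat U * U = 1\<^sub>m m"
  shows "U * transpose_mat U = 1\<^sub>m m"
  using mat_mult_left_right_inverse[of "transpose_mat U" m U] U UU by simp

lemma det_conj:
  fixes U :: "real mat"
  assumes U: "U \<in> carrier_mat m m" and UU: "transpose_mat U * U = 1\<^sub>m m" and M: "M \<in> carrier_mat m m"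
  shows "det (U * M * transpose_mat U) = det M"
proof -
  have "det (U * M * transpose_mat U) = det U * det M * det (transpose_mat U)"
    using U M by (simp add: det_mult[of _ m])
  also have "\<dots> = det M * (det (transpose_mat U) * det U)" by simp
  also have "det (transpose_mat U) * det U = 1"
    using det_mult[of "transpose_mat U" m U] U UU by simp
  finally show ?thesis by simp
qed

lemma psum_conj:
  fixes U :: "real mat"
  assumes U: "U \<in> carrier_mat m m" and UU: "transpose_mat U * U = 1\<^sub>m m" and X: "X \<in> carrier_mat m m"
  shows "psum m s (U * X * transpose_mat U) = psum m s X"
proof (cases "s \<le> m")
  case False then show ?thesis by (simp add: psum_big)
next
  case True
  have UUt: "U * transpose_mat U = 1\<^sub>m m" by (rule orth_right[OF U UU])
  have Y: "U * X * transpose_mat U \<in> carrier_mat m m" using U X by simp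
  show ?thesis
  proof (rule poly_coeff_unique[OF _ True])
    fix t :: real
    have "t \<cdot>\<^sub>m 1\<^sub>m m + U * X * transpose_mat U = U * (t \<cdot>\<^sub>m 1\<^sub>m m + X) * transpose_mat U"
    proof -
      have "U * (t \<cdot>\<^sub>m 1\<^sub>m m + X) * transpose_mat U = (U * (t \<cdot>\<^sub>m 1\<^sub>m m) + U * X) * transpose_mat U"
        using U X by (subst mult_add_distrib_mat[of U m m]) auto
      also have "\<dots> = U * (t \<cdot>\<^sub>m 1\<^sub>m m) * transpose_mat U + U * X * transpose_mat U"
        using U X by (simp add: add_mult_distrib_mat[of _ m m])
      also have "U * (t \<cdot>\<^sub>m 1\<^sub>m m) * transpose_mat U = t \<cdot>\<^sub>m 1\<^sub>m m"
      proof -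
        have "U * (t \<cdot>\<^sub>m 1\<^sub>m m) = t \<cdot>\<^sub>m U"
          using U by (subst mult_smult_distrib[of U m m]) auto
        then have "U * (t \<cdot>\<^sub>m 1\<^sub>m m) * transpose_mat U = t \<cdot>\<^sub>m (U * transpose_mat U)"
          using U by (simp add: mult_smult_assoc_mat[of U m m])
        then show ?thesis using UUt by simp
      qed
      finally show ?thesis by simp
    qed
    then have "det (t \<cdot>\<^sub>m 1\<^sub>m m + U * X * transpose_mat U) = det (t \<cdot>\<^sub>m 1\<^sub>m m + X)"
      using det_conj[OF U UU, of "t \<cdot>\<^sub>m 1\<^sub>m m + X"] X by simp
    then show "(\<Sum>k\<le>m. t^(m-k) * psum m k (U * X * transpose_mat U)) = (\<Sum>k\<le>m. t^(m-k) * psum m k X)"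
      using det_tI_add[OF Y, of t] det_tI_add[OF X, of t] by simp
  qed
qed


lemma mult_entry:
  fixes A B :: "real mat"
  assumes "A \<in> carrier_mat a b" "B \<in> carrier_mat b c" "i < a" "j < c"
  shows "(A * B) $$ (i,j) = (\<Sum>l\<in>{0..<b}. A $$ (i,l) * B $$ (l,j))"
  using assms by (simp add: scalar_prod_def)

definition Emat :: "nat \<Rightarrow> nat \<Rightarrow> nat \<Rightarrow> real mat" where
  "Emat n i j = mat n n (\<lambda>(a,b). if a = j \<and> b = i then 1 else 0)"

lemma Emat_carrier[simp]: "Emat n i j \<in> carrier_mat n n"
  unfolding Emat_def by simp

lemma BEBt:
  fixes B :: "real mat"
  assumes B: "B \<in> carrier_mat k n" and i: "i < n" and j: "j < n"
  shows "B * Emat n i j * transpose_mat B = mat k k (\<lambda>(r,t). B $$ (r,j) * B $$ (t,i))"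
proof (rule eq_matI)
  fix r t assume r: "r < dim_row (mat k k (\<lambda>(r,t). B $$ (r,j) * B $$ (t,i)))"
    and t: "t < dim_col (mat k k (\<lambda>(r,t). B $$ (r,j) * B $$ (t,i)))"
  then have r: "r < k" and t: "t < k" by auto
  have BE: "(B * Emat n i j) $$ (r,b) = (if b = i then B $$ (r,j) else 0)" if b: "b < n" for b
  proof -
    have "(B * Emat n i j) $$ (r,b) = (\<Sum>l\<in>{0..<n}. B $$ (r,l) * Emat n i j $$ (l,b))"
      using B r b by (simp add: mult_entry[of _ k n _ n])
    also have "\<dots> = (\<Sum>l\<in>{0..<n}. if l = j then (if b = i then B $$ (r,j) else 0) else 0)"
      using b by (intro sum.cong refl) (auto simp: Emat_def)
    also have "\<dots> = (if b = i then B $$ (r,j) else 0)" using j by simp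
    finally show ?thesis .
  qed
  have "(B * Emat n i j * transpose_mat B) $$ (r,t) = (\<Sum>l\<in>{0..<n}. (B * Emat n i j) $$ (r,l) * transpose_mat B $$ (l,t))"
    using B r t by (intro mult_entry[of _ k n _ k]) auto
  also have "\<dots> = (\<Sum>l\<in>{0..<n}. if l = i then B $$ (r,j) * B $$ (t,i) else 0)"
    using B t by (intro sum.cong refl) (auto simp: BE)
  also have "\<dots> = B $$ (r,j) * B $$ (t,i)" using i by simp
  finally show "(B * Emat n i j * transpose_mat B) $$ (r,t) = mat k k (\<lambda>(r,t). B $$ (r,j) * B $$ (t,i)) $$ (r,t)"
    using r t by simp
qed (use B in auto)

lemma det_one_minus_rank1:
  fixes w v :: "nat \<Rightarrow> real"
  shows "det (1\<^sub>m k - mat k k (\<lambda>(r,t). w r * v t)) = 1 - (\<Sum>r\<in>{0..<k}. w r * v r)"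
proof -
  have carr: "1\<^sub>m k - mat k k (\<lambda>(r,t). w r * v t) \<in> carrier_mat k k" unfolding carrier_mat_def by simp
  have "det (1\<^sub>m k - mat k k (\<lambda>(r,t). w r * v t)) = dets (\<lambda>r t. (- w r) * v t + (if r = t then 1 else 0)) {0..<k}"
    unfolding det_def'[OF carr] dets_def
  proof (intro sum.cong refl arg_cong2[where f="(*)"] prod.cong)
    fix p r assume p: "p \<in> {p. p permutes {0..<k}}" and r: "r \<in> {0..<k}"
    then have "p r \<in> {0..<k}" using permutes_in_image by fastforce
    then show "(1\<^sub>m k - mat k k (\<lambda>(r,t). w r * v t)) $$ (r, p r) = (- w r) * v (p r) + (if r = p r then 1 else 0)"
      using r by auto
  qed
  also have "\<dots> = 1 - (\<Sum>r\<in>{0..<k}. w r * v r)"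
    by (subst dets_diag_rank1) (simp_all add: sum_negf)
  finally show ?thesis .
qed


lemma mat_vec_zero:
  fixes A :: "real mat"
  assumes "A \<in> carrier_mat nr nc" shows "A *\<^sub>v 0\<^sub>v nc = 0\<^sub>v nr"
  using assms by (intro eq_vecI) (auto simp: scalar_prod_def)

lemma Gi_props:
  fixes G :: "real mat"
  assumes G: "G \<in> carrier_mat k k" and d: "det G \<noteq> 0" and sym: "transpose_mat G = G"
  shows "(1 / det G) \<cdot>\<^sub>m adj_mat G \<in> carrier_mat k k" 
    "G * ((1 / det G) \<cdot>\<^sub>m adj_mat G) = 1\<^sub>m k"
    "((1 / det G) \<cdot>\<^sub>m adj_mat G) * G = 1\<^sub>m k"
    "transpose_mat ((1 / det G) \<cdot>\<^sub>m adj_mat G) = (1 / det G) \<cdot>\<^sub>m adj_mat G"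
proof -
  define Gi where "Gi = (1 / det G) \<cdot>\<^sub>m adj_mat G"
  have A: "adj_mat G \<in> carrier_mat k k" using adj_mat(1)[OF G] .
  show Gi: "Gi \<in> carrier_mat k k" unfolding Gi_def using A by simp
  have GGi: "G * Gi = 1\<^sub>m k"
  proof -
    have "G * Gi = (1 / det G) \<cdot>\<^sub>m (G * adj_mat G)" unfolding Gi_def using G A by (simp add: mult_smult_distrib[of G k k])
    also have "\<dots> = 1\<^sub>m k" unfolding adj_mat(2)[OF G] using d by (auto intro!: eq_matI)
    finally show ?thesis .
  qed
  then show "G * Gi = 1\<^sub>m k" .
  show "Gi * G = 1\<^sub>m k"
  proof -
    have "Gi * G = (1 / det G) \<cdot>\<^sub>m (adj_mat G * G)" unfolding Gi_def using G A by (simp add: mult_smult_assoc_mat[of _ k k])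
    also have "\<dots> = 1\<^sub>m k" unfolding adj_mat(3)[OF G] using d by (auto intro!: eq_matI)
    finally show ?thesis .
  qed
  have t1: "transpose_mat Gi * G = 1\<^sub>m k"
    using transpose_mult[OF G Gi] sym GGi by simp
  have "transpose_mat Gi = transpose_mat Gi * (G * Gi)" using GGi Gi by simp
  also have "\<dots> = (transpose_mat Gi * G) * Gi" using Gi G by simp
  also have "\<dots> = Gi" using t1 Gi by simp
  finally show "transpose_mat Gi = Gi" .
qed

lemma PS:
  fixes B :: "real mat"
  assumes B: "B \<in> carrier_mat k n" and i: "i < n" and j: "j < n"
  shows "det (B * transpose_mat B) * (pinv_mat B * B) $$ (i,j)
         = det (B * transpose_mat B) - det (B * (1\<^sub>m n - Emat n i j) * transpose_mat B)"
proof -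
  define G where "G = B * transpose_mat B"
  have G: "G \<in> carrier_mat k k" unfolding G_def using B by simp
  have Bt: "transpose_mat B \<in> carrier_mat n k" using B by simp
  define E where "E = Emat n i j"
  have E: "E \<in> carrier_mat n n" unfolding E_def by simp
  have IE: "1\<^sub>m n - E \<in> carrier_mat n n" using E by (simp add: minus_carrier_mat)
  define M where "M = B * (1\<^sub>m n - E) * transpose_mat B"
  have M: "M \<in> carrier_mat k k" unfolding M_def using B IE by simp
  have split: "M = G - B * E * transpose_mat B"
  proof -
    have "B * (1\<^sub>m n - E) = B * 1\<^sub>m n - B * E" by (rule mult_minus_distrib_mat[OF B _ E]) simp
    then have "B * (1\<^sub>m n - E) = B - B * E" using B by simp
    then have "M = (B - B * E) * transpose_mat B" unfolding M_def by simp
    also have "\<dots> = B * transpose_mat B - B * E * transpose_mat B" using B E Bt by (intro minus_mult_distrib_mat[of _ k n]) auto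
    finally show ?thesis unfolding G_def .
  qed
  show ?thesis
  proof (cases "det G = 0")
    case True
    obtain y where y: "y \<in> carrier_vec k" "y \<noteq> 0\<^sub>v k" "G *\<^sub>v y = 0\<^sub>v k"
      using True det_0_iff_vec_prod_zero_field[OF G] by blast
    define z where "z = transpose_mat B *\<^sub>v y"
    have z: "z \<in> carrier_vec n" unfolding z_def using B y by simp
    have "z \<bullet> z = y \<bullet> (B *\<^sub>v z)" unfolding z_def using transpose_vec_mult_scalar[OF B z y(1)] by (simp add: z_def)
    also have "B *\<^sub>v z = G *\<^sub>v y" unfolding z_def G_def using B y by simp
    finally have zz: "z \<bullet> z = 0" using y by simp
    have z0: "z = 0\<^sub>v n"
    proof
      have "(\<Sum>a\<in>{0..<n}. z $ a * z $ a) = 0" using zz z by (simp add: scalar_prod_def)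
      then have "\<forall>a\<in>{0..<n}. z $ a * z $ a = 0" by (subst sum_nonneg_eq_0_iff[symmetric]) auto
      then show "\<And>a. a < dim_vec (0\<^sub>v n) \<Longrightarrow> z $ a = 0\<^sub>v n $ a" by auto
      show "dim_vec z = dim_vec (0\<^sub>v n)" using z by simp
    qed
    have M': "M = B * ((1\<^sub>m n - E) * transpose_mat B)" unfolding M_def using B IE by simp
    have t1: "transpose_mat ((1\<^sub>m n - E) * transpose_mat B) = B * transpose_mat (1\<^sub>m n - E)"
      using transpose_mult[OF IE Bt] by simp
    have tM: "transpose_mat M = B * (transpose_mat (1\<^sub>m n - E) * transpose_mat B)"
      unfolding M' using transpose_mult[OF B, of "(1\<^sub>m n - E) * transpose_mat B" k] IE Bt t1 B by simp
    have "transpose_mat M *\<^sub>v y = B *\<^sub>v (transpose_mat (1\<^sub>m n - E) *\<^sub>v z)"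
      unfolding tM z_def
    proof -
      have T: "transpose_mat (1\<^sub>m n - E) \<in> carrier_mat n n" using IE by simp
      have "B * (transpose_mat (1\<^sub>m n - E) * transpose_mat B) *\<^sub>v y = B *\<^sub>v ((transpose_mat (1\<^sub>m n - E) * transpose_mat B) *\<^sub>v y)"
        using B T Bt y by (intro assoc_mult_mat_vec[of _ k n _ k]) auto
      also have "(transpose_mat (1\<^sub>m n - E) * transpose_mat B) *\<^sub>v y = transpose_mat (1\<^sub>m n - E) *\<^sub>v (transpose_mat B *\<^sub>v y)"
        using T Bt y by (intro assoc_mult_mat_vec[of _ n n _ k]) auto
      finally show "B * (transpose_mat (1\<^sub>m n - E) * transpose_mat B) *\<^sub>v y = B *\<^sub>v (transpose_mat (1\<^sub>m n - E) *\<^sub>v (transpose_mat B *\<^sub>v y))" .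
    qed
    also have "\<dots> = 0\<^sub>v k" unfolding z0 using B IE by (simp add: mat_vec_zero[of _ n n] mat_vec_zero[OF B])
    finally have "det (transpose_mat M) = 0"
      using det_0_iff_vec_prod_zero_field[of "transpose_mat M" k] M y by auto
    then have "det M = 0" using det_transpose[OF M] by simp
    then show ?thesis using True unfolding G_def M_def E_def by simp
  next
    case False
    have Gsym: "transpose_mat G = G" unfolding G_def using transpose_mult[OF B Bt] by simp
    define Gi where "Gi = (1 / det G) \<cdot>\<^sub>m adj_mat G"
    have Gi: "Gi \<in> carrier_mat k k" and GGi: "G * Gi = 1\<^sub>m k" and GiG: "Gi * G = 1\<^sub>m k"
      and Gisym: "transpose_mat Gi = Gi"
      using Gi_props[OF G False Gsym] unfolding Gi_def by auto
    define X0 where "X0 = transpose_mat B * Gi"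
    have X0: "X0 \<in> carrier_mat n k" unfolding X0_def using Bt Gi by simp
    have BX0: "B * X0 = 1\<^sub>m k"
      unfolding X0_def using assoc_mult_mat[OF B Bt Gi, symmetric] GGi unfolding G_def by simp
    have X0B: "X0 * B = transpose_mat B * (Gi * B)" unfolding X0_def using Bt Gi B by simp
    have p1: "B * X0 * B = B" using BX0 B by simp
    have p2: "X0 * B * X0 = X0" using assoc_mult_mat[OF X0 B X0] BX0 X0 by simp
    have p3: "transpose_mat (B * X0) = B * X0" using BX0 by simp
    have p4: "transpose_mat (X0 * B) = X0 * B"
    proof -
      have "transpose_mat (X0 * B) = transpose_mat B * transpose_mat X0" using transpose_mult[OF X0 B] .
      also have "transpose_mat X0 = Gi * B" unfolding X0_def using transpose_mult[OF Bt Gi] Gisym by simp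
      finally show ?thesis using X0B by simp
    qed
    have ex: "\<exists>X. X \<in> carrier_mat (dim_col B) (dim_row B) \<and> B * X * B = B \<and> X * B * X = X \<and>
      transpose_mat (B * X) = B * X \<and> transpose_mat (X * B) = X * B"
      using X0 p1 p2 p3 p4 B by (intro exI[of _ X0]) auto
    define X where "X = pinv_mat B"
    have "X \<in> carrier_mat (dim_col B) (dim_row B) \<and> B * X * B = B \<and> X * B * X = X \<and>
      transpose_mat (B * X) = B * X \<and> transpose_mat (X * B) = X * B"
      unfolding X_def pinv_mat_def by (rule someI_ex[OF ex])
    then have X: "X \<in> carrier_mat n k" and q1: "B * X * B = B" and q4: "transpose_mat (X * B) = X * B"
      using B by auto
    define P where "P = transpose_mat B * (Gi * B)"
    have XB: "X * B \<in> carrier_mat n n" using X B by simp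
    have XT: "transpose_mat X \<in> carrier_mat k n" using X by simp
    have P: "P \<in> carrier_mat n n" unfolding P_def using B Gi by simp
    have h1: "X * B = transpose_mat B * transpose_mat X" using q4 transpose_mult[OF X B] by simp
    have h2: "P * (X * B) = X * B"
    proof -
      have GiB: "Gi * B \<in> carrier_mat k n" using Gi B by simp
      have BXT: "transpose_mat B * transpose_mat X \<in> carrier_mat n n" using Bt XT by simp
      have "P * (X * B) = transpose_mat B * ((Gi * B) * (transpose_mat B * transpose_mat X))"
        unfolding P_def h1 by (rule assoc_mult_mat[OF Bt GiB BXT])
      also have "(Gi * B) * (transpose_mat B * transpose_mat X) = Gi * (B * (transpose_mat B * transpose_mat X))"
        by (rule assoc_mult_mat[OF Gi B BXT])
      finally have "P * (X * B) = transpose_mat B * (Gi * (B * (transpose_mat B * transpose_mat X)))" .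
      also have "B * (transpose_mat B * transpose_mat X) = G * transpose_mat X"
        unfolding G_def using B X by simp
      also have "Gi * (G * transpose_mat X) = transpose_mat X"
        using assoc_mult_mat[OF Gi G, of "transpose_mat X" n] GiG X by simp
      finally show ?thesis using h1 by simp
    qed
    have h3: "(X * B) * transpose_mat B = transpose_mat B"
    proof -
      have "transpose_mat (B * (X * B)) = transpose_mat (X * B) * transpose_mat B"
        using transpose_mult[OF B XB] .
      moreover have "B * (X * B) = B" using q1 B X by simp
      ultimately show ?thesis using q4 by simp
    qed
    have h4: "(X * B) * P = P"
    proof -
      have GiB: "Gi * B \<in> carrier_mat k n" using Gi B by simp
      have "(X * B) * P = ((X * B) * transpose_mat B) * (Gi * B)"
        unfolding P_def by (rule assoc_mult_mat[OF XB Bt GiB, symmetric])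
      then show ?thesis unfolding h3 P_def .
    qed
    have Psym: "transpose_mat P = P"
    proof -
      have "transpose_mat P = transpose_mat (Gi * B) * B"
        unfolding P_def using transpose_mult[OF Bt, of "Gi * B" n] B Gi by simp
      also have "transpose_mat (Gi * B) = transpose_mat B * Gi"
        using transpose_mult[OF Gi B] Gisym by simp
      finally show ?thesis unfolding P_def using B Gi by simp
    qed
    have XBP: "X * B = P"
    proof -
      have "X * B = transpose_mat (P * (X * B))" using h2 q4 by simp
      also have "\<dots> = transpose_mat (X * B) * transpose_mat P" using transpose_mult[OF P XB] .
      also have "\<dots> = P" using q4 Psym h4 by simp
      finally show ?thesis .
    qed
    have Fij: "(pinv_mat B * B) $$ (i,j) = (\<Sum>r\<in>{0..<k}. (Gi * B) $$ (r,j) * B $$ (r,i))"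
    proof -
      have "(pinv_mat B * B) $$ (i,j) = P $$ (i,j)" using XBP unfolding X_def by simp
      also have "\<dots> = (\<Sum>r\<in>{0..<k}. transpose_mat B $$ (i,r) * (Gi * B) $$ (r,j))"
        unfolding P_def using Bt Gi B i j by (intro mult_entry[of _ n k _ n]) auto
      also have "\<dots> = (\<Sum>r\<in>{0..<k}. (Gi * B) $$ (r,j) * B $$ (r,i))"
        using B i by (intro sum.cong refl) auto
      finally show ?thesis .
    qed
    define R where "R = mat k k (\<lambda>(r,t). B $$ (r,j) * B $$ (t,i))"
    have R: "R \<in> carrier_mat k k" unfolding R_def by simp
    have BEB: "B * E * transpose_mat B = R" unfolding E_def R_def by (rule BEBt[OF B i j])
    have GiR: "Gi * R = mat k k (\<lambda>(r,t). (Gi * B) $$ (r,j) * B $$ (t,i))"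
    proof (rule eq_matI)
      fix r t assume "r < dim_row (mat k k (\<lambda>(r,t). (Gi * B) $$ (r,j) * B $$ (t,i)))"
        "t < dim_col (mat k k (\<lambda>(r,t). (Gi * B) $$ (r,j) * B $$ (t,i)))"
      then have r: "r < k" and t: "t < k" by auto
      have "(Gi * R) $$ (r,t) = (\<Sum>q\<in>{0..<k}. Gi $$ (r,q) * R $$ (q,t))"
        using Gi R r t by (intro mult_entry[of _ k k _ k]) auto
      also have "\<dots> = (\<Sum>q\<in>{0..<k}. Gi $$ (r,q) * B $$ (q,j)) * B $$ (t,i)"
        unfolding sum_distrib_right using t by (intro sum.cong refl) (auto simp: R_def)
      also have "(\<Sum>q\<in>{0..<k}. Gi $$ (r,q) * B $$ (q,j)) = (Gi * B) $$ (r,j)"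
        using Gi B r j by (intro mult_entry[symmetric, of _ k k _ n]) auto
      finally show "(Gi * R) $$ (r,t) = mat k k (\<lambda>(r,t). (Gi * B) $$ (r,j) * B $$ (t,i)) $$ (r,t)"
        using r t by simp
    qed (use Gi R in auto)
    have fac: "G - R = G * (1\<^sub>m k - Gi * R)"
    proof -
      have "G * (1\<^sub>m k - Gi * R) = G * 1\<^sub>m k - G * (Gi * R)"
        using G Gi R by (intro mult_minus_distrib_mat[of _ k k]) auto
      also have "G * (Gi * R) = R" using assoc_mult_mat[OF G Gi R, symmetric] GGi R by simp
      finally show ?thesis using G by simp
    qed
    have "det M = det (G - R)" using split BEB by simp
    also have "\<dots> = det G * det (1\<^sub>m k - Gi * R)"
      unfolding fac using G Gi R by (intro det_mult) (auto intro: minus_carrier_mat)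
    also have "det (1\<^sub>m k - Gi * R) = 1 - (\<Sum>r\<in>{0..<k}. (Gi * B) $$ (r,j) * B $$ (r,i))"
      unfolding GiR by (rule det_one_minus_rank1)
    finally have "det M = det G * (1 - (pinv_mat B * B) $$ (i,j))" unfolding Fij .
    then show ?thesis unfolding G_def M_def E_def by (simp add: algebra_simps)
  qed
qed


lemma pick_upt: assumes "c < n" shows "pick {0..<n} c = c"
proof -
  have e: "{a. a < n \<and> a \<in> UNIV} = {0..<n}" by auto
  have "pick UNIV c = pick {a. a < n \<and> a \<in> UNIV} c"
    by (rule pick_reduce_set) (use assms e in simp)
  then show ?thesis using e pick_UNIV by simp
qed

lemma row_submat_carrier:
  assumes A: "A \<in> carrier_mat m n" and S: "S \<subseteq> {0..<m}"
  shows "row_submat A S \<in> carrier_mat (card S) n"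
proof -
  have "{i. i < dim_row A \<and> i \<in> S} = S" "{j. j < dim_col A \<and> j \<in> {0..<dim_col A}} = {0..<n}" using A S by auto
  then show ?thesis unfolding row_submat_def carrier_mat_def using A by (simp add: dim_submatrix)
qed

lemma row_submat_index:
  assumes A: "A \<in> carrier_mat m n" and S: "S \<subseteq> {0..<m}" and r: "r < card S" and c: "c < n"
  shows "row_submat A S $$ (r,c) = A $$ (pick S r, c)"
proof -
  have e: "{i. i < dim_row A \<and> i \<in> S} = S" "{j. j < dim_col A \<and> j \<in> {0..<dim_col A}} = {0..<n}" using A S by auto
  have "row_submat A S $$ (r,c) = A $$ (pick S r, pick {0..<n} c)"
    unfolding row_submat_def using A r c e by (subst submatrix_index) auto
  then show ?thesis using pick_upt[OF c] by simp
qed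

lemma row_submat_sandwich:
  fixes A N :: "real mat"
  assumes A: "A \<in> carrier_mat m n" and S: "S \<subseteq> {0..<m}" and N: "N \<in> carrier_mat n n"
  shows "row_submat A S * N * transpose_mat (row_submat A S) = submatrix (A * N * transpose_mat A) S S"
proof -
  define B where "B = row_submat A S"
  define k where "k = card S"
  have B: "B \<in> carrier_mat k n" unfolding B_def k_def by (rule row_submat_carrier[OF A S])
  have fS: "finite S" using S finite_subset by blast
  have eS: "{i. i < m \<and> i \<in> S} = S" using S by auto
  have pk: "pick S r < m" if "r < k" for r using pick_in_set_le[of r S] that S unfolding k_def by auto
  show ?thesis unfolding B_def[symmetric]
  proof (rule eq_matI)
    fix r t assume "r < dim_row (submatrix (A * N * transpose_mat A) S S)" "t < dim_col (submatrix (A * N * transpose_mat A) S S)"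
    then have r: "r < k" and t: "t < k" using A N eS by (auto simp: dim_submatrix k_def)
    have "(B * N * transpose_mat B) $$ (r,t) = (\<Sum>b\<in>{0..<n}. (B * N) $$ (r,b) * transpose_mat B $$ (b,t))"
      using B N r t by (intro mult_entry[of _ k n _ k]) auto
    also have "\<dots> = (\<Sum>b\<in>{0..<n}. (A * N) $$ (pick S r, b) * transpose_mat A $$ (b, pick S t))"
    proof (intro sum.cong refl)
      fix b assume b: "b \<in> {0..<n}"
      have "(B * N) $$ (r,b) = (\<Sum>a\<in>{0..<n}. B $$ (r,a) * N $$ (a,b))"
        using B N r b by (intro mult_entry[of _ k n _ n]) auto
      also have "\<dots> = (\<Sum>a\<in>{0..<n}. A $$ (pick S r, a) * N $$ (a,b))"
        using r by (intro sum.cong refl) (auto simp: B_def row_submat_index[OF A S] k_def)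
      also have "\<dots> = (A * N) $$ (pick S r, b)"
        using A N pk[OF r] b by (intro mult_entry[symmetric, of _ m n _ n]) auto
      finally show "(B * N) $$ (r,b) * transpose_mat B $$ (b,t) = (A * N) $$ (pick S r, b) * transpose_mat A $$ (b, pick S t)"
        using B A b t pk[OF t] by (simp add: B_def row_submat_index[OF A S] k_def)
    qed
    also have "\<dots> = (A * N * transpose_mat A) $$ (pick S r, pick S t)"
      using A N pk[OF r] pk[OF t] by (intro mult_entry[symmetric, of _ m n _ m]) auto
    also have "\<dots> = submatrix (A * N * transpose_mat A) S S $$ (r,t)"
      using A N r t eS by (subst submatrix_index) (auto simp: k_def)
    finally show "(B * N * transpose_mat B) $$ (r,t) = submatrix (A * N * transpose_mat A) S S $$ (r,t)" .
  qed (use B A N eS in \<open>auto simp: dim_submatrix k_def\<close>)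
qed

lemma sum_swap_esym:
  fixes f lam :: "nat \<Rightarrow> real"
  assumes s: "1 \<le> s"
  shows "(\<Sum>S\<in>{S. S \<subseteq> {0..<m} \<and> card S = s}. \<Sum>k\<in>S. f k * (\<Prod>i\<in>S - {k}. lam i))
       = (\<Sum>k\<in>{0..<m}. f k * esym (s - 1) ({0..<m} - {k}) lam)"
proof -
  have "(\<Sum>S\<in>{S. S \<subseteq> {0..<m} \<and> card S = s}. \<Sum>k\<in>S. f k * (\<Prod>i\<in>S - {k}. lam i))
      = (\<Sum>S\<in>{S. S \<subseteq> {0..<m} \<and> card S = s}. \<Sum>k\<in>{0..<m}. if k \<in> S then f k * (\<Prod>i\<in>S - {k}. lam i) else 0)"
  proof (rule sum.cong[OF refl])
    fix S assume "S \<in> {S. S \<subseteq> {0..<m} \<and> card S = s}"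
    then have "S \<subseteq> {0..<m}" by auto
    then show "(\<Sum>k\<in>S. f k * (\<Prod>i\<in>S - {k}. lam i)) = (\<Sum>k\<in>{0..<m}. if k \<in> S then f k * (\<Prod>i\<in>S - {k}. lam i) else 0)"
      by (simp add: sum.inter_restrict[symmetric] Int_absorb1)
  qed
  also have "\<dots> = (\<Sum>k\<in>{0..<m}. \<Sum>S\<in>{S. S \<subseteq> {0..<m} \<and> card S = s}. if k \<in> S then f k * (\<Prod>i\<in>S - {k}. lam i) else 0)"
    by (rule sum.swap)
  also have "\<dots> = (\<Sum>k\<in>{0..<m}. f k * esym (s - 1) ({0..<m} - {k}) lam)"
  proof (rule sum.cong[OF refl])
    fix k assume k: "k \<in> {0..<m}"
    have fin: "finite {S. S \<subseteq> {0..<m} \<and> card S = s}" by simp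
    have "(\<Sum>S\<in>{S. S \<subseteq> {0..<m} \<and> card S = s}. if k \<in> S then f k * (\<Prod>i\<in>S - {k}. lam i) else 0)
        = (\<Sum>S\<in>{S. S \<subseteq> {0..<m} \<and> card S = s \<and> k \<in> S}. f k * (\<Prod>i\<in>S - {k}. lam i))"
      using fin by (simp add: sum.If_cases Int_def conj_commute conj_left_commute)
    also have "\<dots> = (\<Sum>T\<in>{T. T \<subseteq> {0..<m} - {k} \<and> card T = s - 1}. f k * (\<Prod>i\<in>T. lam i))"
    proof (rule sum.reindex_bij_witness[where i="insert k" and j="\<lambda>S. S - {k}"])
      fix S assume S: "S \<in> {S. S \<subseteq> {0..<m} \<and> card S = s \<and> k \<in> S}"
      then have fS: "finite S" using finite_subset by blast
      show "insert k (S - {k}) = S" using S by auto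
      show "S - {k} \<in> {T. T \<subseteq> {0..<m} - {k} \<and> card T = s - 1}" using S fS by auto
      show "f k * (\<Prod>i\<in>S - {k}. lam i) = f k * (\<Prod>i\<in>S - {k}. lam i)" by simp
    next
      fix T assume T: "T \<in> {T. T \<subseteq> {0..<m} - {k} \<and> card T = s - 1}"
      then have fT: "finite T" using finite_subset by blast
      show "insert k T - {k} = T" using T by auto
      have "k \<notin> T" using T by auto
      then have "card (insert k T) = s" using T fT s by simp
      then show "insert k T \<in> {S. S \<subseteq> {0..<m} \<and> card S = s \<and> k \<in> S}" using T k by auto
    qed
    also have "\<dots> = f k * esym (s - 1) ({0..<m} - {k}) lam"
      unfolding esym_def by (simp add: sum_distrib_left)
    finally show "(\<Sum>S\<in>{S. S \<subseteq> {0..<m} \<and> card S = s}. if k \<in> S then f k * (\<Prod>i\<in>S - {k}. lam i) else 0) = f k * esym (s - 1) ({0..<m} - {k}) lam" .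
  qed
  finally show ?thesis .
qed


lemma split_E:
  fixes B E :: "real mat"
  assumes B: "B \<in> carrier_mat k n" and E: "E \<in> carrier_mat n n"
  shows "B * (1\<^sub>m n - E) * transpose_mat B = B * transpose_mat B - B * E * transpose_mat B"
proof -
  have Bt: "transpose_mat B \<in> carrier_mat n k" using B by simp
  have "B * (1\<^sub>m n - E) = B * 1\<^sub>m n - B * E" by (rule mult_minus_distrib_mat[OF B _ E]) simp
  then have "B * (1\<^sub>m n - E) = B - B * E" using B by simp
  then have "B * (1\<^sub>m n - E) * transpose_mat B = (B - B * E) * transpose_mat B" by simp
  also have "\<dots> = B * transpose_mat B - B * E * transpose_mat B" using B E Bt by (intro minus_mult_distrib_mat[of _ k n]) auto
  finally show ?thesis .
qed

lemma psum_diag: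
  assumes "\<And>r t. r < m \<Longrightarrow> t < m \<Longrightarrow> X $$ (r,t) = (if r = t then lam r else 0)"
  shows "psum m s X = esym s {0..<m} lam"
  unfolding psum_def esym_def
proof (rule sum.cong[OF refl])
  fix S assume S: "S \<in> {S. S \<subseteq> {0..<m} \<and> card S = s}"
  then have fS: "finite S" using finite_subset by blast
  have "dets (\<lambda>i j. X $$ (i,j)) S = dets (\<lambda>i j. (\<lambda>_. 0) i * (\<lambda>_. 0) j + (if i = j then lam i else 0)) S"
  proof (rule dets_cong)
    fix i j assume "i \<in> S" "j \<in> S"
    then have "i < m" "j < m" using S by auto
    then show "X $$ (i,j) = (\<lambda>_. 0) i * (\<lambda>_. 0) j + (if i = j then lam i else 0)" using assms by simp
  qed
  also have "\<dots> = (\<Prod>i\<in>S. lam i)" by (subst dets_diag_rank1[OF fS]) simp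
  finally show "dets (\<lambda>i j. X $$ (i,j)) S = (\<Prod>i\<in>S. lam i)" .
qed

lemma psum_diag_rank1:
  assumes "\<And>r t. r < m \<Longrightarrow> t < m \<Longrightarrow> X $$ (r,t) = (if r = t then lam r else 0) - a r * b t"
  shows "psum m s X = esym s {0..<m} lam - (\<Sum>S\<in>{S. S \<subseteq> {0..<m} \<and> card S = s}. \<Sum>k\<in>S. a k * b k * (\<Prod>i\<in>S - {k}. lam i))"
  unfolding psum_def esym_def sum_subtractf[symmetric]
proof (rule sum.cong[OF refl])
  fix S assume S: "S \<in> {S. S \<subseteq> {0..<m} \<and> card S = s}"
  then have fS: "finite S" using finite_subset by blast
  have "dets (\<lambda>i j. X $$ (i,j)) S = dets (\<lambda>i j. (\<lambda>r. - a r) i * b j + (if i = j then lam i else 0)) S"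
  proof (rule dets_cong)
    fix i j assume "i \<in> S" "j \<in> S"
    then have "i < m" "j < m" using S by auto
    then show "X $$ (i,j) = (\<lambda>r. - a r) i * b j + (if i = j then lam i else 0)" using assms by simp
  qed
  also have "\<dots> = (\<Prod>i\<in>S. lam i) - (\<Sum>k\<in>S. a k * b k * (\<Prod>i\<in>S - {k}. lam i))"
    by (subst dets_diag_rank1[OF fS]) (simp add: sum_negf)
  finally show "dets (\<lambda>i j. X $$ (i,j)) S = (\<Prod>i\<in>S. lam i) - (\<Sum>k\<in>S. a k * b k * (\<Prod>i\<in>S - {k}. lam i))" .
qed


theorem lemma2p1:
  fixes A U Sigma V :: "real mat" and m n s :: nat
  assumes "A \<in> carrier_mat m n"
    and "U \<in> carrier_mat m m" and "transpose_mat U * U = 1\<^sub>m m"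
    and "V \<in> carrier_mat n n" and "transpose_mat V * V = 1\<^sub>m n"
    and "Sigma \<in> carrier_mat m n"
    and "\<forall>i<m. \<forall>j<n. i \<noteq> j \<longrightarrow> Sigma $$ (i,j) = 0"
    and "\<forall>i<min m n. Sigma $$ (i,i) \<ge> 0"
    and "\<forall>i j. i \<le> j \<and> j < min m n \<longrightarrow> Sigma $$ (j,j) \<le> Sigma $$ (i,i)"
    and "A = U * Sigma * transpose_mat V"
    and "1 \<le> s" and "s \<le> vec_space.rank m A"
  shows "let lam = (\<lambda>i. if i < min m n then (Sigma $$ (i,i))\<^sup>2 else 0);
             H = (1 / esym s {0..<m} lam) \<cdot>\<^sub>m
                 (U * mat m m (\<lambda>(i,j). if i = j then esym (s - 1) ({0..<m} - {i}) lam else 0)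
                    * transpose_mat U)
         in vol_expect A s (\<lambda>S. pinv_mat (row_submat A S) * row_submat A S) n n
            = transpose_mat A * H * A"
proof -
  have A: "A \<in> carrier_mat m n" and U: "U \<in> carrier_mat m m" and UU: "transpose_mat U * U = 1\<^sub>m m"
    and V: "V \<in> carrier_mat n n" and VV: "transpose_mat V * V = 1\<^sub>m n" and Sg: "Sigma \<in> carrier_mat m n"
    and off: "\<forall>i<m. \<forall>j<n. i \<noteq> j \<longrightarrow> Sigma $$ (i,j) = 0" and Adef: "A = U * Sigma * transpose_mat V"
    and s1: "1 \<le> s"
    using assms by auto
  define lam where "lam = (\<lambda>i. if i < min m n then (Sigma $$ (i,i))\<^sup>2 else 0)"
  define Z where "Z = esym s {0..<m} lam"
  define Dm where "Dm = mat m m (\<lambda>(i,j). if i = j then esym (s - 1) ({0..<m} - {i}) lam else 0)"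
  define F where "F = (\<lambda>S. pinv_mat (row_submat A S) * row_submat A S)"
  define Ut where "Ut = transpose_mat U"
  define Vt where "Vt = transpose_mat V"
  define At where "At = transpose_mat A"
  have Ut: "Ut \<in> carrier_mat m m" unfolding Ut_def using U by simp
  have Vt: "Vt \<in> carrier_mat n n" unfolding Vt_def using V by simp
  have At: "At \<in> carrier_mat n m" unfolding At_def using A by simp
  have Dm: "Dm \<in> carrier_mat m m" unfolding Dm_def by simp
  have UtU: "Ut * U = 1\<^sub>m m" using UU unfolding Ut_def .
  have UUt: "U * Ut = 1\<^sub>m m" using orth_right[OF U UU] unfolding Ut_def .
  have VtV: "Vt * V = 1\<^sub>m n" using VV unfolding Vt_def .
  define P where "P = Ut * A"
  have P: "P \<in> carrier_mat m n" unfolding P_def using Ut A by simp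
  define Pt where "Pt = transpose_mat P"
  have Pt: "Pt \<in> carrier_mat n m" unfolding Pt_def using P by simp
  have AUP: "A = U * P"
  proof -
    have "U * P = (U * Ut) * A" unfolding P_def by (rule assoc_mult_mat[OF U Ut A, symmetric])
    then show ?thesis using UUt A by simp
  qed
  have AtPt: "At = Pt * Ut"
    unfolding At_def Pt_def Ut_def by (subst AUP) (rule transpose_mult[OF U P])
  have PSV: "P = Sigma * Vt"
  proof -
    have "P = Ut * (U * (Sigma * Vt))" unfolding P_def Adef Vt_def[symmetric] using U Sg Vt by simp
    also have "\<dots> = (Ut * U) * (Sigma * Vt)" using Ut U Sg Vt by (intro assoc_mult_mat[symmetric]) auto
    finally show ?thesis using UtU Sg Vt by simp
  qed
  have PtVS: "Pt = V * transpose_mat Sigma"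
    unfolding Pt_def PSV using transpose_mult[OF Sg Vt] unfolding Vt_def by simp
  have PPt: "P * Pt = Sigma * transpose_mat Sigma"
  proof -
    have St: "transpose_mat Sigma \<in> carrier_mat n m" using Sg by simp
    have VS: "V * transpose_mat Sigma \<in> carrier_mat n m" using V St by simp
    have "P * Pt = Sigma * Vt * (V * transpose_mat Sigma)" unfolding PSV PtVS ..
    also have "\<dots> = Sigma * (Vt * (V * transpose_mat Sigma))" by (rule assoc_mult_mat[OF Sg Vt VS])
    also have "Vt * (V * transpose_mat Sigma) = (Vt * V) * transpose_mat Sigma"
      using Vt V St by (intro assoc_mult_mat[symmetric]) auto
    finally show ?thesis using VtV St by simp
  qed
  have Lam: "(P * Pt) $$ (r,t) = (if r = t then lam r else 0)" if r: "r < m" and t: "t < m" for r t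
  proof -
    have St: "transpose_mat Sigma \<in> carrier_mat n m" using Sg by simp
    have "(P * Pt) $$ (r,t) = (\<Sum>a\<in>{0..<n}. Sigma $$ (r,a) * transpose_mat Sigma $$ (a,t))"
      unfolding PPt using Sg St r t by (intro mult_entry[of _ m n _ m]) auto
    also have "\<dots> = (\<Sum>a\<in>{0..<n}. if a = r \<and> a = t then Sigma $$ (r,r) * Sigma $$ (r,r) else 0)"
    proof (rule sum.cong[OF refl])
      fix a assume a: "a \<in> {0..<n}"
      show "Sigma $$ (r,a) * transpose_mat Sigma $$ (a,t) = (if a = r \<and> a = t then Sigma $$ (r,r) * Sigma $$ (r,r) else 0)"
        using a r t Sg off by auto
    qed
    also have "\<dots> = (if r = t then lam r else 0)"
      unfolding lam_def using r t by (auto simp: power2_eq_square)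
    finally show ?thesis .
  qed
  have sand: "A * N * At = U * (P * N * Pt) * Ut" if N: "N \<in> carrier_mat n n" for N
  proof -
    have PN: "P * N \<in> carrier_mat m n" using P N by simp
    have PtUt: "Pt * Ut \<in> carrier_mat n m" using Pt Ut by simp
    have PNPt: "P * N * Pt \<in> carrier_mat m m" using PN Pt by simp
    have "A * N * At = (U * P) * N * (Pt * Ut)" unfolding AtPt by (subst AUP) (rule refl)
    also have "(U * P) * N = U * (P * N)" by (rule assoc_mult_mat[OF U P N])
    also have "U * (P * N) * (Pt * Ut) = U * ((P * N) * (Pt * Ut))" by (rule assoc_mult_mat[OF U PN PtUt])
    also have "(P * N) * (Pt * Ut) = ((P * N) * Pt) * Ut" by (rule assoc_mult_mat[OF PN Pt Ut, symmetric])
    also have "U * (P * N * Pt * Ut) = U * (P * N * Pt) * Ut" by (rule assoc_mult_mat[OF U PNPt Ut, symmetric])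
    finally show ?thesis .
  qed
  define SS where "SS = {S. S \<subseteq> {0..<m} \<and> card S = s}"
  define K where "K = A * At"
  have K: "K \<in> carrier_mat m m" unfolding K_def using A At by simp
  have K1: "K = A * 1\<^sub>m n * At" unfolding K_def using A by simp
  have psumK: "psum m s K = Z"
  proof -
    have "psum m s K = psum m s (U * (P * 1\<^sub>m n * Pt) * transpose_mat U)"
      unfolding K1 sand[OF one_carrier_mat] Ut_def ..
    also have "\<dots> = psum m s (P * 1\<^sub>m n * Pt)" using U UU P Pt by (intro psum_conj) auto
    also have "\<dots> = Z" unfolding Z_def using P Lam by (intro psum_diag) auto
    finally show ?thesis .
  qed
  have den: "(\<Sum>J\<in>{J. J \<subseteq> {0..<dim_row A} \<and> card J = s}. det (row_submat A J * transpose_mat (row_submat A J))) = Z"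
  proof -
    have "(\<Sum>J\<in>{J. J \<subseteq> {0..<dim_row A} \<and> card J = s}. det (row_submat A J * transpose_mat (row_submat A J)))
       = psum m s K"
      unfolding psum_def
    proof (rule sum.cong)
      show "{J. J \<subseteq> {0..<dim_row A} \<and> card J = s} = {S. S \<subseteq> {0..<m} \<and> card S = s}" using A by simp
    next
      fix J assume "J \<in> {S. S \<subseteq> {0..<m} \<and> card S = s}"
      then have J: "J \<subseteq> {0..<m}" by auto
      have "row_submat A J * transpose_mat (row_submat A J) = row_submat A J * 1\<^sub>m n * transpose_mat (row_submat A J)"
        using row_submat_carrier[OF A J] by simp
      also have "\<dots> = submatrix K J J" unfolding K1 At_def by (rule row_submat_sandwich[OF A J one_carrier_mat])
      finally show "det (row_submat A J * transpose_mat (row_submat A J)) = dets (\<lambda>i j. K $$ (i,j)) J"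
        using det_submatrix_dets[OF K J] by simp
    qed
    then show ?thesis using psumK by simp
  qed
  have main: "vol_expect A s F n n $$ (i,j) = (At * ((1 / Z) \<cdot>\<^sub>m (U * Dm * Ut)) * A) $$ (i,j)"
    if i: "i < n" and j: "j < n" for i j
  proof -
    define E where "E = Emat n i j"
    have E: "E \<in> carrier_mat n n" unfolding E_def by simp
    have IE: "1\<^sub>m n - E \<in> carrier_mat n n" using E by (simp add: minus_carrier_mat)
    define K' where "K' = A * (1\<^sub>m n - E) * At"
    have K': "K' \<in> carrier_mat m m" unfolding K'_def using A IE At by simp
    have termS: "vol_prob A s S * F S $$ (i,j) = (dets (\<lambda>r t. K $$ (r,t)) S - dets (\<lambda>r t. K' $$ (r,t)) S) / Z"
      if S: "S \<in> SS" for S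
    proof -
      have S': "S \<subseteq> {0..<m}" using S unfolding SS_def by auto
      define B where "B = row_submat A S"
      have B: "B \<in> carrier_mat (card S) n" unfolding B_def by (rule row_submat_carrier[OF A S'])
      have d1: "det (B * transpose_mat B) = dets (\<lambda>r t. K $$ (r,t)) S"
      proof -
        have "B * transpose_mat B = B * 1\<^sub>m n * transpose_mat B" using B by simp
        also have "\<dots> = submatrix K S S" unfolding K1 At_def B_def by (rule row_submat_sandwich[OF A S' one_carrier_mat])
        finally show ?thesis using det_submatrix_dets[OF K S'] by simp
      qed
      have d2: "det (B * (1\<^sub>m n - E) * transpose_mat B) = dets (\<lambda>r t. K' $$ (r,t)) S"
      proof -
        have "B * (1\<^sub>m n - E) * transpose_mat B = submatrix K' S S"
          unfolding K'_def At_def B_def by (rule row_submat_sandwich[OF A S' IE])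
        then show ?thesis using det_submatrix_dets[OF K' S'] by simp
      qed
      have "vol_prob A s S * F S $$ (i,j) = det (B * transpose_mat B) * F S $$ (i,j) / Z"
        unfolding vol_prob_def den B_def by simp
      also have "det (B * transpose_mat B) * F S $$ (i,j) = det (B * transpose_mat B) - det (B * (1\<^sub>m n - E) * transpose_mat B)"
        unfolding F_def B_def[symmetric] E_def by (rule PS[OF B i j])
      finally show ?thesis unfolding d1 d2 .
    qed
    have lhs: "vol_expect A s F n n $$ (i,j) = (psum m s K - psum m s K') / Z"
    proof -
      have "vol_expect A s F n n $$ (i,j) = (\<Sum>S\<in>SS. vol_prob A s S * F S $$ (i,j))"
        unfolding vol_expect_def SS_def using i j A by simp
      also have "\<dots> = (\<Sum>S\<in>SS. (dets (\<lambda>r t. K $$ (r,t)) S - dets (\<lambda>r t. K' $$ (r,t)) S) / Z)"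
        by (rule sum.cong[OF refl]) (rule termS)
      also have "\<dots> = (psum m s K - psum m s K') / Z"
        unfolding psum_def SS_def sum_divide_distrib[symmetric] sum_subtractf ..
      finally show ?thesis .
    qed
    have psumK': "psum m s K' = Z - (\<Sum>S\<in>SS. \<Sum>k\<in>S. P $$ (k,j) * P $$ (k,i) * (\<Prod>l\<in>S - {k}. lam l))"
    proof -
      have "psum m s K' = psum m s (U * (P * (1\<^sub>m n - E) * Pt) * transpose_mat U)"
        unfolding K'_def sand[OF IE] Ut_def ..
      also have "\<dots> = psum m s (P * (1\<^sub>m n - E) * Pt)" using U UU P Pt IE by (intro psum_conj) auto
      also have "\<dots> = Z - (\<Sum>S\<in>SS. \<Sum>k\<in>S. P $$ (k,j) * P $$ (k,i) * (\<Prod>l\<in>S - {k}. lam l))"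
        unfolding Z_def SS_def
      proof (rule psum_diag_rank1)
        fix r t assume r: "r < m" and t: "t < m"
        have "P * (1\<^sub>m n - E) * Pt = P * Pt - P * E * Pt" unfolding Pt_def by (rule split_E[OF P E])
        moreover have "P * E * Pt = mat m m (\<lambda>(r,t). P $$ (r,j) * P $$ (t,i))"
          unfolding Pt_def E_def by (rule BEBt[OF P i j])
        ultimately have "(P * (1\<^sub>m n - E) * Pt) $$ (r,t) = (P * Pt) $$ (r,t) - P $$ (r,j) * P $$ (t,i)"
          using r t P Pt by simp
        then show "(P * (1\<^sub>m n - E) * Pt) $$ (r,t) = (if r = t then lam r else 0) - P $$ (r,j) * P $$ (t,i)"
          using Lam[OF r t] by simp
      qed
      finally show ?thesis .
    qed
    have diff: "psum m s K - psum m s K' = (\<Sum>k\<in>{0..<m}. (P $$ (k,j) * P $$ (k,i)) * esym (s - 1) ({0..<m} - {k}) lam)"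
      unfolding psumK psumK' SS_def using sum_swap_esym[OF s1, where m=m and f="\<lambda>k. P $$ (k,j) * P $$ (k,i)" and lam=lam] by simp
    have rhs: "(At * ((1 / Z) \<cdot>\<^sub>m (U * Dm * Ut)) * A) $$ (i,j)
             = (1 / Z) * (\<Sum>k\<in>{0..<m}. P $$ (k,i) * esym (s - 1) ({0..<m} - {k}) lam * P $$ (k,j))"
    proof -
      have M: "U * Dm * Ut \<in> carrier_mat m m" using U Dm Ut by simp
      have "At * ((1 / Z) \<cdot>\<^sub>m (U * Dm * Ut)) = (1 / Z) \<cdot>\<^sub>m (At * (U * Dm * Ut))"
        by (rule mult_smult_distrib[OF At M])
      then have "At * ((1 / Z) \<cdot>\<^sub>m (U * Dm * Ut)) * A = (1 / Z) \<cdot>\<^sub>m (At * (U * Dm * Ut) * A)"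
        using At M A by (simp add: mult_smult_assoc_mat[of _ n m])
      also have "At * (U * Dm * Ut) * A = Pt * Dm * P"
      proof -
        have AtU: "At * U = Pt" unfolding AtPt using assoc_mult_mat[OF Pt Ut U] UtU Pt by simp
        have UtA: "Ut * A = P" unfolding P_def ..
        have DUt: "Dm * Ut \<in> carrier_mat m m" using Dm Ut by simp
        have "At * (U * Dm * Ut) * A = At * (U * (Dm * Ut)) * A" using assoc_mult_mat[OF U Dm Ut] by simp
        also have "At * (U * (Dm * Ut)) = (At * U) * (Dm * Ut)" by (rule assoc_mult_mat[OF At U DUt, symmetric])
        also have "(At * U) * (Dm * Ut) * A = (At * U) * ((Dm * Ut) * A)" using AtU Pt DUt A by (intro assoc_mult_mat) auto
        also have "(Dm * Ut) * A = Dm * (Ut * A)" by (rule assoc_mult_mat[OF Dm Ut A])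
        also have "(At * U) * (Dm * (Ut * A)) = Pt * Dm * P" unfolding AtU UtA using Pt Dm P by (intro assoc_mult_mat[symmetric]) auto
        finally show ?thesis .
      qed
      finally have eq: "At * ((1 / Z) \<cdot>\<^sub>m (U * Dm * Ut)) * A = (1 / Z) \<cdot>\<^sub>m (Pt * Dm * P)" .
      have "(Pt * Dm * P) $$ (i,j) = (\<Sum>b\<in>{0..<m}. (Pt * Dm) $$ (i,b) * P $$ (b,j))"
        using Pt Dm P i j by (intro mult_entry[of _ n m _ n]) auto
      also have "\<dots> = (\<Sum>k\<in>{0..<m}. P $$ (k,i) * esym (s - 1) ({0..<m} - {k}) lam * P $$ (k,j))"
      proof (rule sum.cong[OF refl])
        fix b assume b: "b \<in> {0..<m}"
        have "(Pt * Dm) $$ (i,b) = (\<Sum>a\<in>{0..<m}. Pt $$ (i,a) * Dm $$ (a,b))"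
          using Pt Dm i b by (intro mult_entry[of _ n m _ m]) auto
        also have "\<dots> = (\<Sum>a\<in>{0..<m}. if a = b then P $$ (b,i) * esym (s - 1) ({0..<m} - {b}) lam else 0)"
          using b i P by (intro sum.cong[OF refl]) (auto simp: Dm_def Pt_def)
        also have "\<dots> = P $$ (b,i) * esym (s - 1) ({0..<m} - {b}) lam" using b by simp
        finally show "(Pt * Dm) $$ (i,b) * P $$ (b,j) = P $$ (b,i) * esym (s - 1) ({0..<m} - {b}) lam * P $$ (b,j)" by simp
      qed
      finally show ?thesis unfolding eq using Pt Dm P i j by simp
    qed
    show ?thesis unfolding lhs rhs diff
      by (simp add: sum_divide_distrib divide_inverse mult.commute mult.left_commute mult.assoc)
  qed
  have "vol_expect A s F n n = At * ((1 / Z) \<cdot>\<^sub>m (U * Dm * Ut)) * A"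
  proof (rule eq_matI)
    fix i j assume "i < dim_row (At * ((1 / Z) \<cdot>\<^sub>m (U * Dm * Ut)) * A)" "j < dim_col (At * ((1 / Z) \<cdot>\<^sub>m (U * Dm * Ut)) * A)"
    then have "i < n" "j < n" using At A by auto
    then show "vol_expect A s F n n $$ (i,j) = (At * ((1 / Z) \<cdot>\<^sub>m (U * Dm * Ut)) * A) $$ (i,j)" by (rule main)
  qed (use At A in \<open>auto simp: vol_expect_def\<close>)
  then show ?thesis
    unfolding Let_def lam_def[symmetric] Z_def[symmetric] Dm_def[symmetric] F_def[symmetric] Ut_def[symmetric] At_def[symmetric]
    by simp
qed

end
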